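(* Let $n\in\mathbb N$ and let $A$ be a partition of $\{1,\dots,2n\}$. For $u=(u_0,u_1,\dots,u_{2n})\in(\mathbb R^d)^{2n+1}$ write $M_A(u):=M_A((u_l)_{l\in I_A})$. Then for all $j\in\{2,\dots,2n+1\}$ with $j-1\in I_A$, $$u_0+\sum_{l=1}^{j-1}[M_A(u)]_l=u_{j-1}+u_0+\sum_{l\in\{1,\dots,j-2\}\cap I_A}\sigma_{A,j-2}(l)\,u_l.$$
   Context: $J_A=\{\max a:a\in A\}$, $I_A=\{1,\dots,2n\}\setminus J_A$, and $a(l)$ denotes the block of $A$ containing $l$. For $w=(w_l)_{l\in I_A}\in(\mathbb R^d)^{I_A}$, $M_A(w)\in(\mathbb R^d)^{2n}$ is defined by $[M_A(w)]_j=w_j$ if $j\in I_A$ and $[M_A(w)]_j=-\sum_{l\in a(j)\setminus\{j\}}w_l$ if $j\in J_A$. For $j\in\{0,\dots,2n+1\}$, $\sigma_{A,j}:\{1,\dots,2n\}\to\{0,1\}$ is $\sigma_{A,j}(l)=1$ if $\max a(l)>j$ and $0$ otherwise. *)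

theory Defs
  imports "HOL-Analysis.Analysis" "HOL-Library.Disjoint_Sets"
begin

text \<open>A partition A of {1..2n} is a set of blocks (nat sets) with partition_on {1..2*n} A.\<close>

definition J_set :: "nat set set \<Rightarrow> nat set" where
  "J_set A = {Max a | a. a \<in> A}"

definition I_set :: "nat \<Rightarrow> nat set set \<Rightarrow> nat set" where
  "I_set n A = {1..2*n} - J_set A"

definition blk :: "nat set set \<Rightarrow> nat \<Rightarrow> nat set" where
  "blk A l = (THE a. a \<in> A \<and> l \<in> a)"

text \<open>M_A(w): only the values w l for l in I_A are used.\<close>
definition M_map :: "nat \<Rightarrow> nat set set \<Rightarrow> (nat \<Rightarrow> 'v::real_vector) \<Rightarrow> nat \<Rightarrow> 'v" where
  "M_map n A w j =
     (if j \<in> I_set n A then w j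
      else if j \<in> J_set A then - (\<Sum>l \<in> blk A j - {j}. w l)
      else 0)"

definition sigma :: "nat set set \<Rightarrow> nat \<Rightarrow> nat \<Rightarrow> nat" where
  "sigma A j l = (if Max (blk A l) > j then 1 else 0)"

end

theory Submission
  imports Defs
begin

lemma blk_props:
  assumes P: "partition_on X A" and l: "l \<in> X"
  shows "blk A l \<in> A \<and> l \<in> blk A l"
proof -
  have ex: "\<exists>a. a \<in> A \<and> l \<in> a" using P l unfolding partition_on_def by blast
  have un: "\<And>a b. a \<in> A \<Longrightarrow> l \<in> a \<Longrightarrow> b \<in> A \<Longrightarrow> l \<in> b \<Longrightarrow> a = b"
    using P unfolding partition_on_def by (meson disjointD disjoint_iff)
  have "\<exists>!a. a \<in> A \<and> l \<in> a" using ex un by blast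
  then show ?thesis unfolding blk_def by (rule theI')
qed

lemma blk_eq:
  assumes P: "partition_on X A" and a: "a \<in> A" "l \<in> a"
  shows "blk A l = a"
proof -
  have lX: "l \<in> X" using P a unfolding partition_on_def by blast
  have un: "\<And>a b. a \<in> A \<Longrightarrow> l \<in> a \<Longrightarrow> b \<in> A \<Longrightarrow> l \<in> b \<Longrightarrow> a = b"
    using P unfolding partition_on_def by (meson disjointD disjoint_iff)
  show ?thesis using blk_props[OF P lX] un a by blast
qed

lemma blk_fin:
  fixes n :: nat
  assumes P: "partition_on {1..2*n} A" and a: "a \<in> A"
  shows "finite a \<and> a \<noteq> {} \<and> a \<subseteq> {1..2*n}"
proof -
  have s: "a \<subseteq> {1..2*n}" using P a unfolding partition_on_def by blast
  have "a \<noteq> {}" using P a unfolding partition_on_def by blast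
  then show ?thesis using s finite_subset[OF s] by simp
qed

theorem lemma10:
  fixes n :: nat and A :: "nat set set" and u :: "nat \<Rightarrow> real ^ 'd" and j :: nat
  assumes "partition_on {1..2*n} A"
    and "j \<in> {2..2*n+1}" and "j - 1 \<in> I_set n A"
  shows "u 0 + (\<Sum>l = 1..j-1. M_map n A u l)
       = u (j-1) + u 0 + (\<Sum>l \<in> {1..j-2} \<inter> I_set n A. real (sigma A (j-2) l) *\<^sub>R u l)"
proof -
  note P = assms(1)
  define k where "k = j - 1"
  have k1: "k \<ge> 1" and kn: "k \<le> 2*n" using assms(2) k_def by auto
  have kI: "k \<in> I_set n A" using assms(3) k_def by simp
  have j2: "j - 2 = k - 1" using k_def by simp
  define S where "S = {1..k-1}"
  define I where "I = I_set n A"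
  define J where "J = J_set A"
  have SX: "S \<subseteq> {1..2*n}" using kn S_def by auto
  have IJ: "I = {1..2*n} - J" unfolding I_def J_def I_set_def by simp
  have JA: "\<And>x. x \<in> J \<longleftrightarrow> (\<exists>a\<in>A. x = Max a)" unfolding J_def J_set_def by auto
  have Mb: "\<And>l. l \<in> {1..2*n} \<Longrightarrow> Max (blk A l) \<in> blk A l \<and> l \<le> Max (blk A l)"
    using blk_props[OF P] blk_fin[OF P] by (meson Max_ge Max_in)
  have Mb2: "\<And>l. l \<in> {1..2*n} \<Longrightarrow> Max (blk A l) \<in> J"
    using blk_props[OF P] JA by blast
  have blkJ: "\<And>x. x \<in> J \<Longrightarrow> Max (blk A x) = x \<and> x \<in> {1..2*n}"
  proof -
    fix x assume "x \<in> J"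
    then obtain a where a: "a \<in> A" "x = Max a" using JA by blast
    have "x \<in> a" using a blk_fin[OF P a(1)] by simp
    have "x \<in> {1..2*n}" using \<open>x \<in> a\<close> blk_fin[OF P a(1)] by blast
    then show "Max (blk A x) = x \<and> x \<in> {1..2*n}" using blk_eq[OF P a(1)] a \<open>x \<in> a\<close> by auto
  qed
  have ins: "{1..k} = insert k S" using k1 S_def by auto
  have kS: "k \<notin> S" using S_def by auto
  have Mk: "M_map n A u k = u k" using kI unfolding M_map_def by simp
  have sumS: "(\<Sum>l\<in>S. M_map n A u l) = (\<Sum>l\<in>S \<inter> I. u l) + (\<Sum>l\<in>S \<inter> J. - (\<Sum>m \<in> blk A l - {l}. u m))"
  proof -
    have "(\<Sum>l\<in>S. M_map n A u l) = (\<Sum>l\<in>S. (if l \<in> I then u l else 0) + (if l \<in> J then - (\<Sum>m \<in> blk A l - {l}. u m) else 0))"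
      by (rule sum.cong) (use IJ SX in \<open>auto simp: M_map_def I_def J_def\<close>)
    also have "\<dots> = (\<Sum>l\<in>S \<inter> I. u l) + (\<Sum>l\<in>S \<inter> J. - (\<Sum>m \<in> blk A l - {l}. u m))"
      by (simp add: sum.distrib sum.inter_restrict S_def)
    finally show ?thesis .
  qed
  have inner: "\<And>x. x \<in> S \<inter> J \<Longrightarrow> (\<Sum>m \<in> blk A x - {x}. u m) = (\<Sum>l\<in>S \<inter> I. if blk A l = blk A x then u l else 0)"
  proof -
    fix x assume x: "x \<in> S \<inter> J"
    have xm: "Max (blk A x) = x" and xX: "x \<in> {1..2*n}" using blkJ x by auto
    have ba: "blk A x \<in> A" using blk_props[OF P xX] by simp
    have fb: "finite (blk A x)" using blk_fin[OF P ba] by simp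
    have "blk A x - {x} = {l \<in> S \<inter> I. blk A l = blk A x}"
    proof (intro equalityI subsetI)
      fix l assume l: "l \<in> blk A x - {x}"
      have lX: "l \<in> {1..2*n}" using l blk_fin[OF P ba] by auto
      have bl: "blk A l = blk A x" using blk_eq[OF P ba] l by simp
      have "l \<le> x" using l xm fb by (metis DiffD1 Max_ge)
      then have "l < x" using l by auto
      then have lS: "l \<in> S" using x lX S_def by auto
      have "l \<notin> J"
      proof
        assume "l \<in> J" then have "Max (blk A l) = l" using blkJ by blast
        then show False using bl xm l by auto
      qed
      then show "l \<in> {l \<in> S \<inter> I. blk A l = blk A x}" using lS lX bl IJ by auto
    next
      fix l assume l: "l \<in> {l \<in> S \<inter> I. blk A l = blk A x}"
      then have "l \<in> blk A l" using blk_props[OF P] IJ by auto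
      moreover have "l \<noteq> x" using l x IJ by auto
      ultimately show "l \<in> blk A x - {x}" using l by auto
    qed
    then show "(\<Sum>m \<in> blk A x - {x}. u m) = (\<Sum>l\<in>S \<inter> I. if blk A l = blk A x then u l else 0)"
      by (simp add: sum.inter_filter[symmetric] S_def)
  qed
  have swap: "(\<Sum>x\<in>S \<inter> J. (\<Sum>m \<in> blk A x - {x}. u m)) = (\<Sum>l\<in>S \<inter> I. if Max (blk A l) \<le> k - 1 then u l else 0)"
  proof -
    have "(\<Sum>x\<in>S \<inter> J. (\<Sum>m \<in> blk A x - {x}. u m)) = (\<Sum>x\<in>S \<inter> J. \<Sum>l\<in>S \<inter> I. if blk A l = blk A x then u l else 0)"
      using inner by (rule sum.cong[OF refl])
    also have "\<dots> = (\<Sum>l\<in>S \<inter> I. \<Sum>x\<in>S \<inter> J. if blk A l = blk A x then u l else 0)"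
      by (rule sum.swap)
    also have "\<dots> = (\<Sum>l\<in>S \<inter> I. if Max (blk A l) \<le> k - 1 then u l else 0)"
    proof (rule sum.cong[OF refl])
      fix l assume l: "l \<in> S \<inter> I"
      have lX: "l \<in> {1..2*n}" using l IJ by auto
      have eq: "{x \<in> S \<inter> J. blk A l = blk A x} = (if Max (blk A l) \<le> k - 1 then {Max (blk A l)} else {})"
      proof -
        have "x = Max (blk A l)" if "x \<in> S \<inter> J" "blk A l = blk A x" for x
        proof -
          have "Max (blk A x) = x" using blkJ[of x] that(1) by blast
          then show ?thesis using that(2) by simp
        qed
        moreover have "blk A (Max (blk A l)) = blk A l"
          using blk_eq[OF P] blk_props[OF P lX] Mb[OF lX] by blast
        moreover have "Max (blk A l) \<in> S \<longleftrightarrow> Max (blk A l) \<le> k - 1"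
          using Mb[OF lX] lX S_def by auto
        ultimately show ?thesis using Mb2[OF lX] S_def by auto
      qed
      have "(\<Sum>x\<in>S \<inter> J. if blk A l = blk A x then u l else 0) = (\<Sum>x\<in>{x \<in> S \<inter> J. blk A l = blk A x}. u l)"
        by (rule sum.inter_filter[symmetric]) (simp add: S_def)
      also have "\<dots> = (if Max (blk A l) \<le> k - 1 then u l else 0)" using eq by simp
      finally show "(\<Sum>x\<in>S \<inter> J. if blk A l = blk A x then u l else 0) = (if Max (blk A l) \<le> k - 1 then u l else 0)" .
    qed
    finally show ?thesis .
  qed
  have rhs: "(\<Sum>l \<in> S \<inter> I. real (sigma A (k-1) l) *\<^sub>R u l) = (\<Sum>l\<in>S \<inter> I. u l) - (\<Sum>l\<in>S \<inter> I. if Max (blk A l) \<le> k - 1 then u l else 0)"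
    by (simp add: sum_subtractf[symmetric] sigma_def, rule sum.cong, auto)
  have "(\<Sum>l = 1..j-1. M_map n A u l) = u k + (\<Sum>l\<in>S. M_map n A u l)"
    using ins kS Mk k_def S_def by simp
  also have "\<dots> = u k + ((\<Sum>l\<in>S \<inter> I. u l) - (\<Sum>x\<in>S \<inter> J. (\<Sum>m \<in> blk A x - {x}. u m)))"
    using sumS by (simp add: sum_negf)
  finally show ?thesis using swap rhs j2 k_def S_def I_def by simp
qed

end
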